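(* Let $\mathcal{X}\subseteq\mathbb{R}^d$, $\mathcal{Y}=\{-1,+1\}$, and let $p(\bm{x},y)$ be a joint distribution on $\mathcal{X}\times\mathcal{Y}$ with $\pi_+=p(y=+1)\in(0,1)$, $\pi_-=1-\pi_+$, $\pi_+\neq 1/2$, and class-conditional densities $p_\pm(\bm{x})=p(\bm{x}\mid y=\pm1)$. Let $\ell:\mathbb{R}\times\mathcal{Y}\to[0,\infty)$ be a loss and $R(g)=\mathbb{E}_{p(\bm{x},y)}[\ell(g(\bm{x}),y)]$ for $g:\mathcal{X}\to\mathbb{R}$. Let $\widehat{R}_{\mathrm{SD}}(g)$ and $\widehat{R}_{\mathrm{PC}}(g)$ be the estimators defined in the context below (computed from data distributed as described there). Then for every $\gamma\in[0,1]$ and every $g$ for which the expectations below are finite, $$\mathbb{E}\big[\gamma\,\widehat{R}_{\mathrm{SD}}(g)+(1-\gamma)\,\widehat{R}_{\mathrm{PC}}(g)\big]=R(g),$$ i.e. $\widehat{R}_{\mathrm{SD\text{-}PC\text{-}Convex}}(g):=\gamma\widehat{R}_{\mathrm{SD}}(g)+(1-\gamma)\widehat{R}_{\mathrm{PC}}(g)$ is an unbiased estimator of the classification risk $R(g)$.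
   Context: Similarity/dissimilarity (SD) data: two labeled examples $(\bm{x},y),(\bm{x}',y')$ drawn independently from $p(\bm x,y)$ form a similar pair if $y=y'$ and a dissimilar pair otherwise. Put $\pi_{\mathrm S}=\pi_+^2+\pi_-^2$, $\pi_{\mathrm D}=2\pi_+\pi_-$, and $p_{\mathrm S}(\bm{x},\bm{x}')=\frac{\pi_+^2}{\pi_{\mathrm S}}p_+(\bm{x})p_+(\bm{x}')+\frac{\pi_-^2}{\pi_{\mathrm S}}p_-(\bm{x})p_-(\bm{x}')$, $p_{\mathrm D}(\bm{x},\bm{x}')=\frac12p_+(\bm{x})p_-(\bm{x}')+\frac12p_-(\bm{x})p_+(\bm{x}')$. Let $\{(\bm{x}_{\mathrm S,i},\bm{x}'_{\mathrm S,i})\}_{i=1}^{n_{\mathrm S}}$ be i.i.d. from $p_{\mathrm S}$ and $\{(\bm{x}_{\mathrm D,i},\bm{x}'_{\mathrm D,i})\}_{i=1}^{n_{\mathrm D}}$ i.i.d. from $p_{\mathrm D}$. With $\mathcal{L}(z,t):=\frac{\pi_+}{\pi_+-\pi_-}\ell(z,t)-\frac{\pi_-}{\pi_+-\pi_-}\ell(z,-t)$, $\widehat{R}_{\mathrm{SD}}(g)=\frac{\pi_{\mathrm S}}{n_{\mathrm S}}\sum_{i=1}^{n_{\mathrm S}}\frac{\mathcal{L}(g(\bm{x}_{\mathrm S,i}),+1)+\mathcal{L}(g(\bm{x}'_{\mathrm S,i}),+1)}{2}+\frac{\pi_{\mathrm D}}{n_{\mathrm D}}\sum_{i=1}^{n_{\mathrm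 D}}\frac{\mathcal{L}(g(\bm{x}_{\mathrm D,i}),-1)+\mathcal{L}(g(\bm{x}'_{\mathrm D,i}),-1)}{2}$. Pairwise comparison (Pcomp) data: define the densities $\widetilde{p}_+(\bm{x})=\frac{\pi_+}{\pi_-^2+\pi_+}p_+(\bm{x})+\frac{\pi_-^2}{\pi_-^2+\pi_+}p_-(\bm{x})$ and $\widetilde{p}_-(\bm{x})=\frac{\pi_+^2}{\pi_+^2+\pi_-}p_+(\bm{x})+\frac{\pi_-}{\pi_+^2+\pi_-}p_-(\bm{x})$ (the marginal distributions of the instance judged more likely, respectively less likely, to be positive in a pairwise comparison). Let $\{(\bm{x}_i,\bm{x}'_i)\}_{i=1}^n$ be i.i.d. pairs with $\bm{x}_i\sim\widetilde p_+$ and $\bm{x}'_i\sim\widetilde p_-$, and $\widehat{R}_{\mathrm{PC}}(g)=\frac1n\sum_{i=1}^n\big(\ell(g(\bm{x}_i),+1)-\pi_+\ell(g(\bm{x}_i),-1)+\ell(g(\bm{x}'_i),-1)-\pi_-\ell(g(\bm{x}'_i),+1)\big)$. *)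

theory Defs
  imports "HOL-Probability.Probability"
begin

text \<open>Instances live in real^'d; labels are the reals -1 and +1.
  pip is the class prior pi_+, pi_- = 1 - pip; pp, pn are the class-conditional
  densities p_+, p_- with respect to Lebesgue measure.\<close>

type_synonym 'd inst = "real ^ 'd"

definition piS :: "real \<Rightarrow> real" where
  "piS pip = pip ^ 2 + (1 - pip) ^ 2"

definition piD :: "real \<Rightarrow> real" where
  "piD pip = 2 * pip * (1 - pip)"

definition pjoint :: "real \<Rightarrow> (('d::finite) inst \<Rightarrow> real) \<Rightarrow> ('d inst \<Rightarrow> real) \<Rightarrow> 'd inst \<Rightarrow> real \<Rightarrow> real" where
  "pjoint pip pp pn x y = (if y = 1 then pip * pp x else (1 - pip) * pn x)"

definition risk :: "real \<Rightarrow> (('d::finite) inst \<Rightarrow> real) \<Rightarrow> ('d inst \<Rightarrow> real)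
    \<Rightarrow> (real \<Rightarrow> real \<Rightarrow> real) \<Rightarrow> ('d inst \<Rightarrow> real) \<Rightarrow> real" where
  "risk pip pp pn loss g = (\<Sum>y\<in>{-1, 1::real}. \<integral>x. pjoint pip pp pn x y * loss (g x) y \<partial>lborel)"

definition pS :: "real \<Rightarrow> (('d::finite) inst \<Rightarrow> real) \<Rightarrow> ('d inst \<Rightarrow> real) \<Rightarrow> 'd inst \<times> 'd inst \<Rightarrow> real" where
  "pS pip pp pn z = pip ^ 2 / piS pip * pp (fst z) * pp (snd z)
                    + (1 - pip) ^ 2 / piS pip * pn (fst z) * pn (snd z)"

definition pD :: "(('d::finite) inst \<Rightarrow> real) \<Rightarrow> ('d inst \<Rightarrow> real) \<Rightarrow> 'd inst \<times> 'd inst \<Rightarrow> real" where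
  "pD pp pn z = 1/2 * pp (fst z) * pn (snd z) + 1/2 * pn (fst z) * pp (snd z)"

definition ptilde_pos :: "real \<Rightarrow> (('d::finite) inst \<Rightarrow> real) \<Rightarrow> ('d inst \<Rightarrow> real) \<Rightarrow> 'd inst \<Rightarrow> real" where
  "ptilde_pos pip pp pn x = pip / ((1 - pip) ^ 2 + pip) * pp x
                           + (1 - pip) ^ 2 / ((1 - pip) ^ 2 + pip) * pn x"

definition ptilde_neg :: "real \<Rightarrow> (('d::finite) inst \<Rightarrow> real) \<Rightarrow> ('d inst \<Rightarrow> real) \<Rightarrow> 'd inst \<Rightarrow> real" where
  "ptilde_neg pip pp pn x = pip ^ 2 / (pip ^ 2 + (1 - pip)) * pp x
                           + (1 - pip) / (pip ^ 2 + (1 - pip)) * pn x"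

definition Lcorr :: "real \<Rightarrow> (real \<Rightarrow> real \<Rightarrow> real) \<Rightarrow> real \<Rightarrow> real \<Rightarrow> real" where
  "Lcorr pip loss z t = pip / (pip - (1 - pip)) * loss z t
                        - (1 - pip) / (pip - (1 - pip)) * loss z (- t)"

definition R_SD :: "real \<Rightarrow> (real \<Rightarrow> real \<Rightarrow> real) \<Rightarrow> (('d::finite) inst \<Rightarrow> real) \<Rightarrow> nat \<Rightarrow> nat
    \<Rightarrow> (nat \<Rightarrow> 'd inst \<times> 'd inst) \<Rightarrow> (nat \<Rightarrow> 'd inst \<times> 'd inst) \<Rightarrow> real" where
  "R_SD pip loss g nS nD S D =
     piS pip / real nS * (\<Sum>i<nS. (Lcorr pip loss (g (fst (S i))) 1 + Lcorr pip loss (g (snd (S i))) 1) / 2)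
   + piD pip / real nD * (\<Sum>i<nD. (Lcorr pip loss (g (fst (D i))) (-1) + Lcorr pip loss (g (snd (D i))) (-1)) / 2)"

definition R_PC :: "real \<Rightarrow> (real \<Rightarrow> real \<Rightarrow> real) \<Rightarrow> (('d::finite) inst \<Rightarrow> real) \<Rightarrow> nat
    \<Rightarrow> (nat \<Rightarrow> 'd inst \<times> 'd inst) \<Rightarrow> real" where
  "R_PC pip loss g n C =
     1 / real n * (\<Sum>i<n. loss (g (fst (C i))) 1 - pip * loss (g (fst (C i))) (-1)
                         + loss (g (snd (C i))) (-1) - (1 - pip) * loss (g (snd (C i))) 1)"

text \<open>Joint law of the three independent i.i.d. samples (S-pairs, D-pairs, Pcomp pairs);
  Q is the law of one Pcomp pair.\<close>
definition sample_measure :: "real \<Rightarrow> (('d::finite) inst \<Rightarrow> real) \<Rightarrow> (('d::finite) inst \<Rightarrow> real) \<Rightarrow> nat \<Rightarrow> nat \<Rightarrow> nat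
    \<Rightarrow> ('d inst \<times> 'd inst) measure
    \<Rightarrow> ((nat \<Rightarrow> 'd inst \<times> 'd inst) \<times> (nat \<Rightarrow> 'd inst \<times> 'd inst) \<times> (nat \<Rightarrow> 'd inst \<times> 'd inst)) measure" where
  "sample_measure pip pp pn nS nD n Q =
     (PiM {..<nS} (\<lambda>_. density lborel (\<lambda>z. ennreal (pS pip pp pn z))))
     \<Otimes>\<^sub>M ((PiM {..<nD} (\<lambda>_. density lborel (\<lambda>z. ennreal (pD pp pn z))))
     \<Otimes>\<^sub>M (PiM {..<n} (\<lambda>_. Q)))"

end

theory Submission
  imports Defs
begin


lemma borel_fst_meas[measurable]:
  "fst \<in> (borel :: ('a::second_countable_topology \<times> 'b::second_countable_topology) measure) \<rightarrow>\<^sub>M borel"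
  unfolding borel_prod[symmetric] by measurable

lemma borel_snd_meas[measurable]:
  "snd \<in> (borel :: ('a::second_countable_topology \<times> 'b::second_countable_topology) measure) \<rightarrow>\<^sub>M borel"
  unfolding borel_prod[symmetric] by measurable

lemma distr_pair_snd':
  assumes "prob_space M" "sigma_finite_measure N"
  shows "distr (M \<Otimes>\<^sub>M N) N snd = N"
proof (intro measure_eqI)
  interpret M: prob_space M by fact
  interpret N: sigma_finite_measure N by fact
  fix A assume A: "A \<in> sets (distr (M \<Otimes>\<^sub>M N) N snd)"
  from A have "emeasure (distr (M \<Otimes>\<^sub>M N) N snd) A = emeasure (M \<Otimes>\<^sub>M N) (space M \<times> A)"
    by (auto simp add: emeasure_distr space_pair_measure dest: sets.sets_into_space intro!: arg_cong2[where f=emeasure])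
  with A show "emeasure (distr (M \<Otimes>\<^sub>M N) N snd) A = emeasure N A"
    by (simp add: N.emeasure_pair_measure_Times M.emeasure_space_1)
qed simp

lemma pair_fst_int:
  fixes f :: "'a \<Rightarrow> real"
  assumes "prob_space M" "prob_space N" "f \<in> borel_measurable M" "integrable M f"
  shows "integrable (M \<Otimes>\<^sub>M N) (\<lambda>\<omega>. f (fst \<omega>))" "(\<integral>\<omega>. f (fst \<omega>) \<partial>(M \<Otimes>\<^sub>M N)) = integral\<^sup>L M f"
proof -
  interpret N: prob_space N by fact
  have d: "distr (M \<Otimes>\<^sub>M N) M fst = M" by (rule N.distr_pair_fst)
  show "integrable (M \<Otimes>\<^sub>M N) (\<lambda>\<omega>. f (fst \<omega>))"
    using integrable_distr_eq[of fst "M \<Otimes>\<^sub>M N" M f] assms d by simp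
  show "(\<integral>\<omega>. f (fst \<omega>) \<partial>(M \<Otimes>\<^sub>M N)) = integral\<^sup>L M f"
    using integral_distr[of fst "M \<Otimes>\<^sub>M N" M f] assms d by simp
qed

lemma pair_snd_int:
  fixes f :: "'a \<Rightarrow> real"
  assumes "prob_space M" "prob_space N" "f \<in> borel_measurable N" "integrable N f"
  shows "integrable (M \<Otimes>\<^sub>M N) (\<lambda>\<omega>. f (snd \<omega>))" "(\<integral>\<omega>. f (snd \<omega>) \<partial>(M \<Otimes>\<^sub>M N)) = integral\<^sup>L N f"
proof -
  have d: "distr (M \<Otimes>\<^sub>M N) N snd = N"
    by (rule distr_pair_snd') (use assms prob_space_imp_sigma_finite in auto)
  show "integrable (M \<Otimes>\<^sub>M N) (\<lambda>\<omega>. f (snd \<omega>))"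
    using integrable_distr_eq[of snd "M \<Otimes>\<^sub>M N" N f] assms d by simp
  show "(\<integral>\<omega>. f (snd \<omega>) \<partial>(M \<Otimes>\<^sub>M N)) = integral\<^sup>L N f"
    using integral_distr[of snd "M \<Otimes>\<^sub>M N" N f] assms d by simp
qed

lemma PiM_comp_int:
  fixes f :: "'a \<Rightarrow> real"
  assumes "prob_space M" "i \<in> I" "f \<in> borel_measurable M" "integrable M f"
  shows "integrable (PiM I (\<lambda>_. M)) (\<lambda>\<omega>. f (\<omega> i))" "(\<integral>\<omega>. f (\<omega> i) \<partial>PiM I (\<lambda>_. M)) = integral\<^sup>L M f"
proof -
  have d: "distr (PiM I (\<lambda>_. M)) M (\<lambda>\<omega>. \<omega> i) = M"
    using distr_PiM_component[of I "\<lambda>_. M" i] assms by simp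
  have m: "(\<lambda>\<omega>. \<omega> i) \<in> measurable (PiM I (\<lambda>_. M)) M"
    using assms(2) by (rule measurable_component_singleton)
  show "integrable (PiM I (\<lambda>_. M)) (\<lambda>\<omega>. f (\<omega> i))"
    using integrable_distr_eq[OF m, of f] assms d by simp
  show "(\<integral>\<omega>. f (\<omega> i) \<partial>PiM I (\<lambda>_. M)) = integral\<^sup>L M f"
    using integral_distr[OF m, of f] assms d by simp
qed

lemma prod_int:
  fixes f :: "'a::euclidean_space \<Rightarrow> real" and h :: "'b::euclidean_space \<Rightarrow> real"
  assumes [measurable]: "f \<in> borel_measurable borel" "h \<in> borel_measurable borel"
    and fi: "integrable lborel f" and hi: "integrable lborel h"
  shows "integrable (lborel :: ('a \<times> 'b) measure) (\<lambda>z. f (fst z) * h (snd z))"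
    "(\<integral>z. f (fst z) * h (snd z) \<partial>(lborel :: ('a \<times> 'b) measure)) = integral\<^sup>L lborel f * integral\<^sup>L lborel h"
proof -
  have P: "pair_sigma_finite (lborel :: 'a measure) (lborel :: 'b measure)"
    by (simp add: lborel.sigma_finite_measure_axioms pair_sigma_finite.intro)
  have int: "integrable (lborel \<Otimes>\<^sub>M lborel) (\<lambda>z. f (fst z) * h (snd z))"
  proof (subst integrable_iff_bounded, intro conjI)
    show "(\<lambda>z. f (fst z) * h (snd z)) \<in> borel_measurable (lborel \<Otimes>\<^sub>M lborel)" by measurable
    have "(\<integral>\<^sup>+ z. ennreal (norm (f (fst z) * h (snd z))) \<partial>(lborel \<Otimes>\<^sub>M lborel))
        = (\<integral>\<^sup>+ x. \<integral>\<^sup>+ y. ennreal (norm (f x)) * ennreal (norm (h y)) \<partial>lborel \<partial>lborel)"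
      by (subst lborel.nn_integral_fst[symmetric]) (auto simp: abs_mult ennreal_mult)
    also have "\<dots> = (\<integral>\<^sup>+ x. ennreal (norm (f x)) \<partial>lborel) * (\<integral>\<^sup>+ y. ennreal (norm (h y)) \<partial>lborel)"
      by (simp add: nn_integral_cmult nn_integral_multc)
    also have "\<dots> < \<infinity>" using fi hi unfolding integrable_iff_bounded
      by (simp add: ennreal_mult_less_top)
    finally show "(\<integral>\<^sup>+ z. ennreal (norm (f (fst z) * h (snd z))) \<partial>(lborel \<Otimes>\<^sub>M lborel)) < \<infinity>" .
  qed
  then show "integrable (lborel :: ('a \<times> 'b) measure) (\<lambda>z. f (fst z) * h (snd z))"
    by (simp add: lborel_prod)
  have "(\<integral>z. f (fst z) * h (snd z) \<partial>(lborel \<Otimes>\<^sub>M lborel)) = (\<integral>x. \<integral>y. f x * h y \<partial>lborel \<partial>lborel)"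
    using pair_sigma_finite.integral_fst'[OF P int] by simp
  also have "\<dots> = integral\<^sup>L lborel f * integral\<^sup>L lborel h" by simp
  finally show "(\<integral>z. f (fst z) * h (snd z) \<partial>(lborel :: ('a \<times> 'b) measure)) = integral\<^sup>L lborel f * integral\<^sup>L lborel h"
    by (simp add: lborel_prod)
qed



lemma lin_int:
  fixes p u v :: "'a \<Rightarrow> real"
  assumes "integrable M (\<lambda>x. p x * u x)" "integrable M (\<lambda>x. p x * v x)"
  shows "integrable M (\<lambda>x. p x * (\<alpha> * u x + \<beta> * v x))"
    "(\<integral>x. p x * (\<alpha> * u x + \<beta> * v x) \<partial>M) = \<alpha> * (\<integral>x. p x * u x \<partial>M) + \<beta> * (\<integral>x. p x * v x \<partial>M)"
proof -
  have eq: "(\<lambda>x. p x * (\<alpha> * u x + \<beta> * v x)) = (\<lambda>x. \<alpha> * (p x * u x) + \<beta> * (p x * v x))"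
    by (auto simp: algebra_simps)
  show "integrable M (\<lambda>x. p x * (\<alpha> * u x + \<beta> * v x))"
    unfolding eq using assms by auto
  show "(\<integral>x. p x * (\<alpha> * u x + \<beta> * v x) \<partial>M) = \<alpha> * (\<integral>x. p x * u x \<partial>M) + \<beta> * (\<integral>x. p x * v x \<partial>M)"
    unfolding eq using assms by (simp add: integral_add)
qed

lemma mix:
  fixes p1 q1 p2 q2 F :: "'a::euclidean_space \<Rightarrow> real"
  assumes m[measurable]: "p1 \<in> borel_measurable borel" "q1 \<in> borel_measurable borel"
     "p2 \<in> borel_measurable borel" "q2 \<in> borel_measurable borel" "F \<in> borel_measurable borel"
    and nn: "\<And>x. 0 \<le> p1 x" "\<And>x. 0 \<le> q1 x" "\<And>x. 0 \<le> p2 x" "\<And>x. 0 \<le> q2 x"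
    and i: "integrable lborel p1" "integrable lborel q1" "integrable lborel p2" "integrable lborel q2"
    and one: "integral\<^sup>L lborel p1 = 1" "integral\<^sup>L lborel q1 = 1" "integral\<^sup>L lborel p2 = 1" "integral\<^sup>L lborel q2 = 1"
    and al: "0 \<le> \<alpha>1" "0 \<le> \<alpha>2" "\<alpha>1 + \<alpha>2 = 1"
    and iF: "integrable lborel (\<lambda>x. p1 x * F x)" "integrable lborel (\<lambda>x. q1 x * F x)"
      "integrable lborel (\<lambda>x. p2 x * F x)" "integrable lborel (\<lambda>x. q2 x * F x)"
  shows "prob_space (density lborel (\<lambda>z. ennreal (\<alpha>1 * p1 (fst z) * q1 (snd z) + \<alpha>2 * p2 (fst z) * q2 (snd z))))"
    "integrable (density lborel (\<lambda>z. ennreal (\<alpha>1 * p1 (fst z) * q1 (snd z) + \<alpha>2 * p2 (fst z) * q2 (snd z)))) (\<lambda>z. F (fst z))"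
    "(\<integral>z. F (fst z) \<partial>density lborel (\<lambda>z. ennreal (\<alpha>1 * p1 (fst z) * q1 (snd z) + \<alpha>2 * p2 (fst z) * q2 (snd z))))
      = \<alpha>1 * (\<integral>x. p1 x * F x \<partial>lborel) + \<alpha>2 * (\<integral>x. p2 x * F x \<partial>lborel)"
    "integrable (density lborel (\<lambda>z. ennreal (\<alpha>1 * p1 (fst z) * q1 (snd z) + \<alpha>2 * p2 (fst z) * q2 (snd z)))) (\<lambda>z. F (snd z))"
    "(\<integral>z. F (snd z) \<partial>density lborel (\<lambda>z. ennreal (\<alpha>1 * p1 (fst z) * q1 (snd z) + \<alpha>2 * p2 (fst z) * q2 (snd z))))
      = \<alpha>1 * (\<integral>x. q1 x * F x \<partial>lborel) + \<alpha>2 * (\<integral>x. q2 x * F x \<partial>lborel)"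
proof -
  define P where "P = (\<lambda>z::'a\<times>'a. \<alpha>1 * p1 (fst z) * q1 (snd z) + \<alpha>2 * p2 (fst z) * q2 (snd z))"
  have Pm[measurable]: "P \<in> borel_measurable (lborel :: ('a\<times>'a) measure)" unfolding P_def by measurable
  have Pnn: "\<And>z. 0 \<le> P z" unfolding P_def using nn al by (auto intro!: add_nonneg_nonneg mult_nonneg_nonneg)
  note pr1 = prod_int[of p1 q1] and pr2 = prod_int[of p2 q2]
  note prF1 = prod_int[of "\<lambda>x. p1 x * F x" q1] and prF2 = prod_int[of "\<lambda>x. p2 x * F x" q2]
  note prG1 = prod_int[of p1 "\<lambda>x. q1 x * F x"] and prG2 = prod_int[of p2 "\<lambda>x. q2 x * F x"]
  have eqP: "P = (\<lambda>z. \<alpha>1 * (p1 (fst z) * q1 (snd z)) + \<alpha>2 * (p2 (fst z) * q2 (snd z)))"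
    unfolding P_def by (auto simp: algebra_simps)
  have Pint: "integrable lborel P" unfolding eqP using pr1 pr2 m i by auto
  have "(\<integral>z. P z \<partial>lborel) = 1" unfolding eqP using pr1 pr2 m i one al
    by (simp add: integral_add)
  then have "(\<integral>\<^sup>+ z. ennreal (P z) \<partial>lborel) = 1"
    using nn_integral_eq_integral[OF Pint] Pnn by simp
  then show "prob_space (density lborel (\<lambda>z. ennreal (\<alpha>1 * p1 (fst z) * q1 (snd z) + \<alpha>2 * p2 (fst z) * q2 (snd z))))"
    by (intro prob_spaceI) (simp add: emeasure_density P_def)
  have eq1: "(\<lambda>z. P z *\<^sub>R F (fst z)) = (\<lambda>z. \<alpha>1 * ((\<lambda>x. p1 x * F x) (fst z) * q1 (snd z)) + \<alpha>2 * ((\<lambda>x. p2 x * F x) (fst z) * q2 (snd z)))"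
    unfolding P_def by (auto simp: algebra_simps)
  have eq2: "(\<lambda>z. P z *\<^sub>R F (snd z)) = (\<lambda>z. \<alpha>1 * (p1 (fst z) * (\<lambda>x. q1 x * F x) (snd z)) + \<alpha>2 * (p2 (fst z) * (\<lambda>x. q2 x * F x) (snd z)))"
    unfolding P_def by (auto simp: algebra_simps)
  have Fm1: "(\<lambda>z. F (fst z)) \<in> borel_measurable (lborel :: ('a\<times>'a) measure)" by measurable
  have Fm2: "(\<lambda>z. F (snd z)) \<in> borel_measurable (lborel :: ('a\<times>'a) measure)" by measurable
  have I1: "integrable lborel (\<lambda>z. P z *\<^sub>R F (fst z))" unfolding eq1 using prF1 prF2 m i iF by auto
  have I2: "integrable lborel (\<lambda>z. P z *\<^sub>R F (snd z))" unfolding eq2 using prG1 prG2 m i iF by auto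
  show "integrable (density lborel (\<lambda>z. ennreal (\<alpha>1 * p1 (fst z) * q1 (snd z) + \<alpha>2 * p2 (fst z) * q2 (snd z)))) (\<lambda>z. F (fst z))"
    using integrable_density[OF Fm1 Pm] Pnn I1 by (simp add: P_def)
  show "integrable (density lborel (\<lambda>z. ennreal (\<alpha>1 * p1 (fst z) * q1 (snd z) + \<alpha>2 * p2 (fst z) * q2 (snd z)))) (\<lambda>z. F (snd z))"
    using integrable_density[OF Fm2 Pm] Pnn I2 by (simp add: P_def)
  have "(\<integral>z. F (fst z) \<partial>density lborel P) = (\<integral>z. P z *\<^sub>R F (fst z) \<partial>lborel)"
    using integral_density[OF Fm1 Pm] Pnn by simp
  also have "\<dots> = \<alpha>1 * (\<integral>x. p1 x * F x \<partial>lborel) + \<alpha>2 * (\<integral>x. p2 x * F x \<partial>lborel)"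
    unfolding eq1 using prF1 prF2 m i iF one by (simp add: integral_add)
  finally show "(\<integral>z. F (fst z) \<partial>density lborel (\<lambda>z. ennreal (\<alpha>1 * p1 (fst z) * q1 (snd z) + \<alpha>2 * p2 (fst z) * q2 (snd z))))
      = \<alpha>1 * (\<integral>x. p1 x * F x \<partial>lborel) + \<alpha>2 * (\<integral>x. p2 x * F x \<partial>lborel)" unfolding P_def .
  have "(\<integral>z. F (snd z) \<partial>density lborel P) = (\<integral>z. P z *\<^sub>R F (snd z) \<partial>lborel)"
    using integral_density[OF Fm2 Pm] Pnn by simp
  also have "\<dots> = \<alpha>1 * (\<integral>x. q1 x * F x \<partial>lborel) + \<alpha>2 * (\<integral>x. q2 x * F x \<partial>lborel)"
    unfolding eq2 using prG1 prG2 m i iF one by (simp add: integral_add)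
  finally show "(\<integral>z. F (snd z) \<partial>density lborel (\<lambda>z. ennreal (\<alpha>1 * p1 (fst z) * q1 (snd z) + \<alpha>2 * p2 (fst z) * q2 (snd z))))
      = \<alpha>1 * (\<integral>x. q1 x * F x \<partial>lborel) + \<alpha>2 * (\<integral>x. q2 x * F x \<partial>lborel)" unfolding P_def .
qed



lemma PiM_avg:
  fixes h :: "'a \<Rightarrow> real"
  assumes "prob_space M" "integrable M h" "0 < k"
  shows "integrable (PiM {..<k} (\<lambda>_. M)) (\<lambda>\<omega>. c / real k * (\<Sum>i<k. h (\<omega> i)))"
    "(\<integral>\<omega>. c / real k * (\<Sum>i<k. h (\<omega> i)) \<partial>PiM {..<k} (\<lambda>_. M)) = c * integral\<^sup>L M h"
proof -
  have hm: "h \<in> borel_measurable M" using assms(2) by (rule borel_measurable_integrable)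
  note pc = PiM_comp_int[OF assms(1) _ hm assms(2), of _ "{..<k}"]
  show "integrable (PiM {..<k} (\<lambda>_. M)) (\<lambda>\<omega>. c / real k * (\<Sum>i<k. h (\<omega> i)))"
    using pc by (intro integrable_mult_right integrable_sum) auto
  have "(\<integral>\<omega>. c / real k * (\<Sum>i<k. h (\<omega> i)) \<partial>PiM {..<k} (\<lambda>_. M))
      = c / real k * (\<Sum>i<k. (\<integral>\<omega>. h (\<omega> i) \<partial>PiM {..<k} (\<lambda>_. M)))"
    using pc by (simp add: integral_sum)
  also have "\<dots> = c / real k * (real k * integral\<^sup>L M h)" using pc by simp
  also have "\<dots> = c * integral\<^sup>L M h" using assms(3) by simp
  finally show "(\<integral>\<omega>. c / real k * (\<Sum>i<k. h (\<omega> i)) \<partial>PiM {..<k} (\<lambda>_. M)) = c * integral\<^sup>L M h" .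
qed

lemma Qside:
  fixes F r :: "'a::euclidean_space \<Rightarrow> real" and Q :: "('a \<times> 'a) measure"
  assumes Qs: "sets Q = sets lborel" and Qd: "distr Q lborel T = density lborel (\<lambda>x. ennreal (r x))"
    and T: "T = fst \<or> T = snd"
    and m[measurable]: "r \<in> borel_measurable borel" "F \<in> borel_measurable borel" and nn: "\<And>x. 0 \<le> r x"
    and i: "integrable lborel (\<lambda>x. r x * F x)"
  shows "integrable Q (\<lambda>z. F (T z))" "(\<integral>z. F (T z) \<partial>Q) = (\<integral>x. r x * F x \<partial>lborel)"
proof -
  have Tm: "T \<in> measurable Q lborel"
    using T by (auto simp: measurable_cong_sets[OF Qs refl])
  have "integrable (distr Q lborel T) F" unfolding Qd using integrable_density[of F lborel r] nn i by simp
  then show "integrable Q (\<lambda>z. F (T z))" using integrable_distr_eq[OF Tm, of F] by simp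
  have "(\<integral>z. F (T z) \<partial>Q) = integral\<^sup>L (distr Q lborel T) F" using integral_distr[OF Tm, of F] by simp
  also have "\<dots> = (\<integral>x. r x * F x \<partial>lborel)" unfolding Qd using integral_density[of F lborel r] nn by simp
  finally show "(\<integral>z. F (T z) \<partial>Q) = (\<integral>x. r x * F x \<partial>lborel)" .
qed



lemma algPC:
  fixes p I1 Im J1 Jm :: real
  assumes "0 < p" "p < 1"
  shows "(p / ((1 - p) ^ 2 + p)) * (1 * I1 + (-p) * Im)
      + ((1 - p) ^ 2 / ((1 - p) ^ 2 + p)) * (1 * J1 + (-p) * Jm)
      + ((p ^ 2 / (p ^ 2 + (1 - p))) * ((-(1-p)) * I1 + 1 * Im)
      + ((1 - p) / (p ^ 2 + (1 - p))) * ((-(1-p)) * J1 + 1 * Jm)) = p * I1 + (1 - p) * Jm"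
proof -
  have AB: "p ^ 2 + (1 - p) = (1 - p) ^ 2 + p" by (simp add: power2_eq_square algebra_simps)
  define A where "A = (1 - p) ^ 2 + p"
  have A: "A \<noteq> 0" using assms unfolding A_def by (smt (verit) zero_le_power2)
  have e: "A = 1 - p * (1 - p)" unfolding A_def by (simp add: power2_eq_square algebra_simps)
  show ?thesis unfolding AB A_def[symmetric] using A
    by (simp add: field_simps) (simp add: e power2_eq_square algebra_simps)
qed
lemma algSD:
  fixes p I1 Im J1 Jm :: real
  assumes "0 < p" "p < 1" "p \<noteq> 1/2"
  defines "c \<equiv> p / (p - (1 - p))" and "d \<equiv> (1 - p) / (p - (1 - p))"
  shows "(p ^ 2 + (1 - p) ^ 2) * ((p ^ 2 / (p ^ 2 + (1 - p) ^ 2)) * (c * I1 + (-d) * Im) + ((1 - p) ^ 2 / (p ^ 2 + (1 - p) ^ 2)) * (c * J1 + (-d) * Jm))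
     + (2 * p * (1 - p)) * ((1/2 * ((-d) * I1 + c * Im) + 1/2 * ((-d) * J1 + c * Jm)) / 2
      + (1/2 * ((-d) * J1 + c * Jm) + 1/2 * ((-d) * I1 + c * Im)) / 2) = p * I1 + (1 - p) * Jm"
proof -
  define S where "S = p ^ 2 + (1 - p) ^ 2"
  define D where "D = p - (1 - p)"
  have S: "S \<noteq> 0" unfolding S_def using assms(1) by (simp add: add_pos_nonneg)
  have D: "D \<noteq> 0" unfolding D_def using assms(3) by auto
  have e: "p - (1 - p) = D" unfolding D_def ..
  show ?thesis unfolding c_def d_def S_def[symmetric] e using S D
    by (simp add: field_simps) (simp add: D_def power2_eq_square algebra_simps)
qed

lemma fin:
  fixes x y z r g :: real
  assumes "x + y = r" "z = r"
  shows "g * x + g * y + (1 - g) * (1 * z) = r"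
proof -
  have "g * x + g * y + (1 - g) * (1 * z) = g * (x + y) + (1 - g) * z" by (simp add: algebra_simps)
  then show ?thesis using assms by (simp add: algebra_simps)
qed

theorem theorem3p1:
  fixes pip :: real and pp pn :: "real ^ ('d::finite) \<Rightarrow> real"
    and loss :: "real \<Rightarrow> real \<Rightarrow> real" and g :: "real ^ ('d::finite) \<Rightarrow> real"
    and nS nD n :: nat and Q :: "((real ^ 'd) \<times> (real ^ 'd)) measure" and \<gamma> :: real
  assumes prior: "0 < pip" "pip < 1" "pip \<noteq> 1/2"
    and pp_meas: "pp \<in> borel_measurable borel" and pp_nonneg: "\<And>x. 0 \<le> pp x"
    and pp_int: "integrable lborel pp" and pp_one: "(\<integral>x. pp x \<partial>lborel) = 1"
    and pn_meas: "pn \<in> borel_measurable borel" and pn_nonneg: "\<And>x. 0 \<le> pn x"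
    and pn_int: "integrable lborel pn" and pn_one: "(\<integral>x. pn x \<partial>lborel) = 1"
    and loss_nonneg: "\<And>z t. t \<in> {-1, 1} \<Longrightarrow> 0 \<le> loss z t"
    and loss_meas: "\<And>t. t \<in> {-1, 1} \<Longrightarrow> (\<lambda>z. loss z t) \<in> borel_measurable borel"
    and g_meas: "g \<in> borel_measurable borel"
    and finite_pos: "\<And>t. t \<in> {-1, 1} \<Longrightarrow> integrable lborel (\<lambda>x. pp x * loss (g x) t)"
    and finite_neg: "\<And>t. t \<in> {-1, 1} \<Longrightarrow> integrable lborel (\<lambda>x. pn x * loss (g x) t)"
    and sizes: "0 < nS" "0 < nD" "0 < n"
    and Q_prob: "prob_space Q" and Q_sets: "sets Q = sets lborel"
    and Q_fst: "distr Q lborel fst = density lborel (\<lambda>x. ennreal (ptilde_pos pip pp pn x))"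
    and Q_snd: "distr Q lborel snd = density lborel (\<lambda>x. ennreal (ptilde_neg pip pp pn x))"
    and gamma: "0 \<le> \<gamma>" "\<gamma> \<le> 1"
  shows "(\<integral>\<omega>. \<gamma> * R_SD pip loss g nS nD (fst \<omega>) (fst (snd \<omega>))
                + (1 - \<gamma>) * R_PC pip loss g n (snd (snd \<omega>))
            \<partial>sample_measure pip pp pn nS nD n Q)
         = risk pip pp pn loss g"
proof -
  have a0: "0 < pip" and a1: "pip < 1" and ah: "pip \<noteq> 1/2" using prior by auto
  have L1m[measurable]: "(\<lambda>x. loss (g x) 1) \<in> borel_measurable borel"
    using measurable_compose[OF g_meas loss_meas[of 1]] by simp
  have Lmm[measurable]: "(\<lambda>x. loss (g x) (-1)) \<in> borel_measurable borel"
    using measurable_compose[OF g_meas loss_meas[of "-1"]] by simp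
  note [measurable] = pp_meas pn_meas
  define c where "c = pip / (pip - (1 - pip))"
  define d where "d = (1 - pip) / (pip - (1 - pip))"
  define FS where "FS = (\<lambda>x. Lcorr pip loss (g x) 1)"
  define FD where "FD = (\<lambda>x. Lcorr pip loss (g x) (-1))"
  define F1 where "F1 = (\<lambda>x. loss (g x) 1 - pip * loss (g x) (-1))"
  define F2 where "F2 = (\<lambda>x. loss (g x) (-1) - (1 - pip) * loss (g x) 1)"
  have FSe: "FS = (\<lambda>x. c * loss (g x) 1 + (-d) * loss (g x) (-1))"
    by (simp add: FS_def Lcorr_def c_def d_def fun_eq_iff)
  have FDe: "FD = (\<lambda>x. (-d) * loss (g x) 1 + c * loss (g x) (-1))"
    by (simp add: FD_def Lcorr_def c_def d_def fun_eq_iff)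
  have F1e: "F1 = (\<lambda>x. 1 * loss (g x) 1 + (-pip) * loss (g x) (-1))"
    by (simp add: F1_def fun_eq_iff)
  have F2e: "F2 = (\<lambda>x. (-(1-pip)) * loss (g x) 1 + 1 * loss (g x) (-1))"
    by (simp add: F2_def fun_eq_iff algebra_simps)
  have FSm[measurable]: "FS \<in> borel_measurable borel" unfolding FSe by measurable
  have FDm[measurable]: "FD \<in> borel_measurable borel" unfolding FDe by measurable
  have F1m[measurable]: "F1 \<in> borel_measurable borel" unfolding F1e by measurable
  have F2m[measurable]: "F2 \<in> borel_measurable borel" unfolding F2e by measurable
  define I1 where "I1 = (\<integral>x. pp x * loss (g x) 1 \<partial>lborel)"
  define Im where "Im = (\<integral>x. pp x * loss (g x) (-1) \<partial>lborel)"
  define J1 where "J1 = (\<integral>x. pn x * loss (g x) 1 \<partial>lborel)"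
  define Jm where "Jm = (\<integral>x. pn x * loss (g x) (-1) \<partial>lborel)"
  have ip1: "integrable lborel (\<lambda>x. pp x * loss (g x) 1)" using finite_pos[of 1] by simp
  have ipm: "integrable lborel (\<lambda>x. pp x * loss (g x) (-1))" using finite_pos[of "-1"] by simp
  have in1: "integrable lborel (\<lambda>x. pn x * loss (g x) 1)" using finite_neg[of 1] by simp
  have inm: "integrable lborel (\<lambda>x. pn x * loss (g x) (-1))" using finite_neg[of "-1"] by simp
  have linpp: "integrable lborel (\<lambda>x. pp x * (\<alpha> * loss (g x) 1 + \<beta> * loss (g x) (-1)))"
     "(\<integral>x. pp x * (\<alpha> * loss (g x) 1 + \<beta> * loss (g x) (-1)) \<partial>lborel) = \<alpha> * I1 + \<beta> * Im" for \<alpha> \<beta>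
    using lin_int[OF ip1 ipm, of \<alpha> \<beta>] by (simp_all add: I1_def Im_def)
  have linpn: "integrable lborel (\<lambda>x. pn x * (\<alpha> * loss (g x) 1 + \<beta> * loss (g x) (-1)))"
     "(\<integral>x. pn x * (\<alpha> * loss (g x) 1 + \<beta> * loss (g x) (-1)) \<partial>lborel) = \<alpha> * J1 + \<beta> * Jm" for \<alpha> \<beta>
    using lin_int[OF in1 inm, of \<alpha> \<beta>] by (simp_all add: J1_def Jm_def)
  have ppFS: "integrable lborel (\<lambda>x. pp x * FS x)"
    "(\<integral>x. pp x * FS x \<partial>lborel) = (c) * I1 + (-d) * Im"
    unfolding FSe by (rule linpp)+
  have pnFS: "integrable lborel (\<lambda>x. pn x * FS x)"
    "(\<integral>x. pn x * FS x \<partial>lborel) = (c) * J1 + (-d) * Jm"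
    unfolding FSe by (rule linpn)+
  have ppFD: "integrable lborel (\<lambda>x. pp x * FD x)"
    "(\<integral>x. pp x * FD x \<partial>lborel) = (-d) * I1 + (c) * Im"
    unfolding FDe by (rule linpp)+
  have pnFD: "integrable lborel (\<lambda>x. pn x * FD x)"
    "(\<integral>x. pn x * FD x \<partial>lborel) = (-d) * J1 + (c) * Jm"
    unfolding FDe by (rule linpn)+
  have ppF1: "integrable lborel (\<lambda>x. pp x * F1 x)"
    "(\<integral>x. pp x * F1 x \<partial>lborel) = (1) * I1 + (-pip) * Im"
    unfolding F1e by (rule linpp)+
  have pnF1: "integrable lborel (\<lambda>x. pn x * F1 x)"
    "(\<integral>x. pn x * F1 x \<partial>lborel) = (1) * J1 + (-pip) * Jm"
    unfolding F1e by (rule linpn)+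
  have ppF2: "integrable lborel (\<lambda>x. pp x * F2 x)"
    "(\<integral>x. pp x * F2 x \<partial>lborel) = (-(1-pip)) * I1 + (1) * Im"
    unfolding F2e by (rule linpp)+
  have pnF2: "integrable lborel (\<lambda>x. pn x * F2 x)"
    "(\<integral>x. pn x * F2 x \<partial>lborel) = (-(1-pip)) * J1 + (1) * Jm"
    unfolding F2e by (rule linpn)+
  have piS_pos: "0 < piS pip" using a0 unfolding piS_def by (simp add: add_pos_nonneg)
  have alS: "0 \<le> pip ^ 2 / piS pip" "0 \<le> (1 - pip) ^ 2 / piS pip" "pip ^ 2 / piS pip + (1 - pip) ^ 2 / piS pip = 1"
    using piS_pos by (auto simp: add_divide_distrib[symmetric]) (simp add: piS_def)
  have alD: "0 \<le> (1/2::real)" "(1/2::real) + 1/2 = 1" by auto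
  note mS = mix[OF pp_meas pp_meas pn_meas pn_meas FSm pp_nonneg pp_nonneg pn_nonneg pn_nonneg
      pp_int pp_int pn_int pn_int pp_one pp_one pn_one pn_one alS ppFS(1) ppFS(1) pnFS(1) pnFS(1)]
  note mD = mix[OF pp_meas pn_meas pn_meas pp_meas FDm pp_nonneg pn_nonneg pn_nonneg pp_nonneg
      pp_int pn_int pn_int pp_int pp_one pn_one pn_one pp_one alD(1) alD ppFD(1) pnFD(1) pnFD(1) ppFD(1)]

  let ?MS = "density lborel (\<lambda>z. ennreal (pip ^ 2 / piS pip * pp (fst z) * pp (snd z) + (1 - pip) ^ 2 / piS pip * pn (fst z) * pn (snd z)))"
  let ?MD = "density lborel (\<lambda>z. ennreal (1/2 * pp (fst z) * pn (snd z) + 1/2 * pn (fst z) * pp (snd z)))"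
  define hS where "hS = (\<lambda>z::'d inst \<times> 'd inst. (FS (fst z) + FS (snd z)) / 2)"
  define hD where "hD = (\<lambda>z::'d inst \<times> 'd inst. (FD (fst z) + FD (snd z)) / 2)"
  define hC where "hC = (\<lambda>z::'d inst \<times> 'd inst. loss (g (fst z)) 1 - pip * loss (g (fst z)) (-1)
                         + loss (g (snd z)) (-1) - (1 - pip) * loss (g (snd z)) 1)"
  have hCe: "hC = (\<lambda>z. F1 (fst z) + F2 (snd z))" by (simp add: hC_def F1_def F2_def fun_eq_iff)
  have ihS: "integrable ?MS hS" unfolding hS_def using mS(2,4) by auto
  have vhS: "integral\<^sup>L ?MS hS = ((pip ^ 2 / piS pip) * (c * I1 + (-d) * Im) + ((1 - pip) ^ 2 / piS pip) * (c * J1 + (-d) * Jm))"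
    unfolding hS_def integral_divide_zero Bochner_Integration.integral_add[OF mS(2) mS(4)] mS(3) mS(5) ppFS(2) pnFS(2) by (simp add: algebra_simps)
  have ihD: "integrable ?MD hD" unfolding hD_def using mD(2,4) by auto
  have vhD: "integral\<^sup>L ?MD hD = (1/2 * ((-d) * I1 + c * Im) + 1/2 * ((-d) * J1 + c * Jm)) / 2
      + (1/2 * ((-d) * J1 + c * Jm) + 1/2 * ((-d) * I1 + c * Im)) / 2"
    unfolding hD_def integral_divide_zero Bochner_Integration.integral_add[OF mD(2) mD(4)] mD(3) mD(5) ppFD(2) pnFD(2) by (simp add: field_simps)
  have ptp_m[measurable]: "ptilde_pos pip pp pn \<in> borel_measurable borel"
    unfolding ptilde_pos_def[abs_def] by measurable
  have ptn_m[measurable]: "ptilde_neg pip pp pn \<in> borel_measurable borel"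
    unfolding ptilde_neg_def[abs_def] by measurable
  have ptp_nn: "0 \<le> ptilde_pos pip pp pn x" for x
    unfolding ptilde_pos_def using a0 a1 pp_nonneg[of x] pn_nonneg[of x]
    by (intro add_nonneg_nonneg mult_nonneg_nonneg divide_nonneg_pos) (auto intro: add_nonneg_pos add_pos_nonneg)
  have ptn_nn: "0 \<le> ptilde_neg pip pp pn x" for x
    unfolding ptilde_neg_def using a0 a1 pp_nonneg[of x] pn_nonneg[of x]
    by (intro add_nonneg_nonneg mult_nonneg_nonneg divide_nonneg_pos) (auto intro: add_nonneg_pos add_pos_nonneg)
  have eqp: "(\<lambda>x. ptilde_pos pip pp pn x * F1 x) = (\<lambda>x. (pip / ((1 - pip) ^ 2 + pip)) * (pp x * F1 x)
      + ((1 - pip) ^ 2 / ((1 - pip) ^ 2 + pip)) * (pn x * F1 x))"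
    by (simp add: ptilde_pos_def fun_eq_iff algebra_simps)
  have eqn: "(\<lambda>x. ptilde_neg pip pp pn x * F2 x) = (\<lambda>x. (pip ^ 2 / (pip ^ 2 + (1 - pip))) * (pp x * F2 x)
      + ((1 - pip) / (pip ^ 2 + (1 - pip))) * (pn x * F2 x))"
    by (simp add: ptilde_neg_def fun_eq_iff algebra_simps)
  have ip: "integrable lborel (\<lambda>x. ptilde_pos pip pp pn x * F1 x)" unfolding eqp using ppF1 pnF1 by auto
  have in': "integrable lborel (\<lambda>x. ptilde_neg pip pp pn x * F2 x)" unfolding eqn using ppF2 pnF2 by auto
  note q1 = Qside[OF Q_sets Q_fst _ ptp_m F1m ptp_nn ip]
  note q2 = Qside[OF Q_sets Q_snd _ ptn_m F2m ptn_nn in']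
  have ihC: "integrable Q hC" unfolding hCe using q1(1) q2(1) by auto
  have vhC: "integral\<^sup>L Q hC = (pip / ((1 - pip) ^ 2 + pip)) * (1 * I1 + (-pip) * Im)
      + ((1 - pip) ^ 2 / ((1 - pip) ^ 2 + pip)) * (1 * J1 + (-pip) * Jm)
      + ((pip ^ 2 / (pip ^ 2 + (1 - pip))) * ((-(1-pip)) * I1 + 1 * Im)
      + ((1 - pip) / (pip ^ 2 + (1 - pip))) * ((-(1-pip)) * J1 + 1 * Jm))"
    unfolding hCe using q1 q2 ppF1 pnF1 ppF2 pnF2
    by (simp add: integral_add eqp eqn)
  have pMS: "prob_space ?MS" by (rule mS(1))
  have pMD: "prob_space ?MD" by (rule mD(1))
  let ?MSn = "PiM {..<nS} (\<lambda>_. ?MS)"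
  let ?MDn = "PiM {..<nD} (\<lambda>_. ?MD)"
  let ?Qn = "PiM {..<n} (\<lambda>_. Q)"
  have pMSn: "prob_space ?MSn" using pMS by (intro prob_space_PiM) auto
  have pMDn: "prob_space ?MDn" using pMD by (intro prob_space_PiM) auto
  have pQn: "prob_space ?Qn" using Q_prob by (intro prob_space_PiM) auto
  have pDQ: "prob_space (?MDn \<Otimes>\<^sub>M ?Qn)" using pMDn pQn by (rule prob_space_pair)
  define TS where "TS = (\<lambda>S. piS pip / real nS * (\<Sum>i<nS. hS (S i)))"
  define TD where "TD = (\<lambda>D. piD pip / real nD * (\<Sum>i<nD. hD (D i)))"
  define TC where "TC = (\<lambda>C. 1 / real n * (\<Sum>i<n. hC (C i)))"
  note aS = PiM_avg[OF pMS ihS sizes(1), of "piS pip", folded TS_def]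
  note aD = PiM_avg[OF pMD ihD sizes(2), of "piD pip", folded TD_def]
  note aC = PiM_avg[OF Q_prob ihC sizes(3), of 1, folded TC_def]
  note t1 = pair_fst_int[OF pMSn pDQ borel_measurable_integrable[OF aS(1)] aS(1)]
  note t2' = pair_fst_int[OF pMDn pQn borel_measurable_integrable[OF aD(1)] aD(1)]
  note t2 = pair_snd_int[OF pMSn pDQ borel_measurable_integrable[OF t2'(1)] t2'(1)]
  note t3' = pair_snd_int[OF pMDn pQn borel_measurable_integrable[OF aC(1)] aC(1)]
  note t3 = pair_snd_int[OF pMSn pDQ borel_measurable_integrable[OF t3'(1)] t3'(1)]
  have RSD: "R_SD pip loss g nS nD S D = TS S + TD D" for S D
    by (simp add: R_SD_def TS_def TD_def hS_def hD_def FS_def FD_def)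
  have RPC: "R_PC pip loss g n C = TC C" for C
    by (simp add: R_PC_def TC_def hC_def)
  have integrand: "(\<lambda>\<omega>. \<gamma> * R_SD pip loss g nS nD (fst \<omega>) (fst (snd \<omega>)) + (1 - \<gamma>) * R_PC pip loss g n (snd (snd \<omega>)))
     = (\<lambda>\<omega>. \<gamma> * TS (fst \<omega>) + \<gamma> * TD (fst (snd \<omega>)) + (1 - \<gamma>) * TC (snd (snd \<omega>)))"
    by (simp add: RSD RPC fun_eq_iff algebra_simps)
  have "(\<integral>\<omega>. \<gamma> * R_SD pip loss g nS nD (fst \<omega>) (fst (snd \<omega>)) + (1 - \<gamma>) * R_PC pip loss g n (snd (snd \<omega>))
            \<partial>sample_measure pip pp pn nS nD n Q)
      = (\<integral>\<omega>. \<gamma> * TS (fst \<omega>) + \<gamma> * TD (fst (snd \<omega>)) + (1 - \<gamma>) * TC (snd (snd \<omega>)) \<partial>(?MSn \<Otimes>\<^sub>M (?MDn \<Otimes>\<^sub>M ?Qn)))"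
    unfolding integrand sample_measure_def pS_def pD_def by simp
  also have "\<dots> = \<gamma> * (piS pip * integral\<^sup>L ?MS hS) + \<gamma> * (piD pip * integral\<^sup>L ?MD hD) + (1 - \<gamma>) * (1 * integral\<^sup>L Q hC)"
    using t1 t2 t2' t3 t3' aS aD aC by (simp add: integral_add)
  also have "\<dots> = risk pip pp pn loss g"
  proof -
    have r: "risk pip pp pn loss g = pip * I1 + (1 - pip) * Jm"
      by (simp add: risk_def pjoint_def I1_def Jm_def mult.assoc)
    have sd: "piS pip * integral\<^sup>L ?MS hS + piD pip * integral\<^sup>L ?MD hD = pip * I1 + (1 - pip) * Jm"
      unfolding vhS vhD unfolding c_def d_def piS_def piD_def by (rule algSD[OF a0 a1 ah])
    have pc: "integral\<^sup>L Q hC = pip * I1 + (1 - pip) * Jm"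
      unfolding vhC by (rule algPC[OF a0 a1])
    show ?thesis unfolding r by (rule fin[OF sd pc])
  qed
  finally show ?thesis .
qed

end
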